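(* There is a deterministic sorting algorithm with error $2$ that, given $n$ elements, uses at most $4 n^{3/2}$ comparisons; that is, it outputs a $2$-sorted ordering of the elements.
   Context: Model of imprecise comparisons: there are $n$ elements, each with a fixed unknown real value; we identify an element with its value. Asked to compare $x_i$ and $x_j$, the comparator answers either "$x_i \ge x_j$" or "$x_j \ge x_i$". If $|x_i-x_j|>1$ the answer is correct; if $|x_i-x_j|\le 1$ the answer is arbitrary (possibly adversarial and adaptive). An ordering $x_{\pi(1)},\dots,x_{\pi(n)}$ is $k$-sorted if $x_{\pi(i)} \ge x_{\pi(j)} - k$ for every $i>j$. Comparison bounds are worst case over inputs and comparator behaviours. *)

theory Defs
  imports Complex_Main
begin

text \<open>A node
  Cmp i j l r asks the comparator about elements i and j; the answer
  "x_i >= x_j" continues in l, the answer "x_j >= x_i" continues in r.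
  A leaf carries the output ordering (a list of element indices,
  listed in positions 1..n).\<close>

datatype dtree = Out "nat list" | Cmp nat nat dtree dtree

fun queries_in :: "nat \<Rightarrow> dtree \<Rightarrow> bool" where
  "queries_in n (Out p) = True"
| "queries_in n (Cmp i j l r) = (i < n \<and> j < n \<and> queries_in n l \<and> queries_in n r)"

text \<open>An arbitrary, possibly adaptive, adversarial comparator
  against a deterministic tree amounts to choosing any permitted answer at
  each node.\<close>
definition may_answer_ge :: "(nat \<Rightarrow> real) \<Rightarrow> nat \<Rightarrow> nat \<Rightarrow> bool" where
  "may_answer_ge x i j \<longleftrightarrow> \<not> (\<bar>x i - x j\<bar> > 1 \<and> x i < x j)"

inductive run :: "(nat \<Rightarrow> real) \<Rightarrow> dtree \<Rightarrow> nat \<Rightarrow> nat list \<Rightarrow> bool" where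
  leaf: "run x (Out p) 0 p"
| left: "may_answer_ge x i j \<Longrightarrow> run x l d p \<Longrightarrow> run x (Cmp i j l r) (Suc d) p"
| right: "may_answer_ge x j i \<Longrightarrow> run x r d p \<Longrightarrow> run x (Cmp i j l r) (Suc d) p"

definition is_ordering :: "nat \<Rightarrow> nat list \<Rightarrow> bool" where
  "is_ordering n p \<longleftrightarrow> distinct p \<and> set p = {..<n}"

definition k_sorted :: "real \<Rightarrow> (nat \<Rightarrow> real) \<Rightarrow> nat list \<Rightarrow> bool" where
  "k_sorted k x p \<longleftrightarrow> (\<forall>i < length p. \<forall>j < i. x (p ! i) \<ge> x (p ! j) - k)"

end

theory Submission
  imports Defs "HOL-Library.Multiset"
begin


datatype 'a prog = Ret 'a | Ask nat nat "'a prog" "'a prog"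

fun bindp :: "'a prog \<Rightarrow> ('a \<Rightarrow> 'b prog) \<Rightarrow> 'b prog" where
  "bindp (Ret a) f = f a"
| "bindp (Ask i j l r) f = Ask i j (bindp l f) (bindp r f)"

inductive exec :: "(nat \<Rightarrow> real) \<Rightarrow> 'a prog \<Rightarrow> nat \<Rightarrow> 'a \<Rightarrow> bool" where
  eRet: "exec x (Ret a) 0 a"
| eL: "may_answer_ge x i j \<Longrightarrow> exec x l d v \<Longrightarrow> exec x (Ask i j l r) (Suc d) v"
| eR: "may_answer_ge x j i \<Longrightarrow> exec x r d v \<Longrightarrow> exec x (Ask i j l r) (Suc d) v"

inductive_cases execRetE: "exec x (Ret a) d v"
inductive_cases execAskE: "exec x (Ask i j l r) d v"

lemma exec_bind:
  "exec x (bindp p f) d v \<Longrightarrow> \<exists>d1 v1 d2. exec x p d1 v1 \<and> exec x (f v1) d2 v \<and> d = d1 + d2"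
proof (induction p arbitrary: d)
  case (Ret a)
  then have "exec x (Ret a) 0 a \<and> exec x (f a) d v \<and> d = 0 + d" by (auto intro: eRet)
  then show ?case by blast
next
  case (Ask i j l r)
  from Ask.prems have "exec x (Ask i j (bindp l f) (bindp r f)) d v" by simp
  then show ?case
  proof (rule execAskE)
    fix d' assume h: "d = Suc d'" "may_answer_ge x i j" "exec x (bindp l f) d' v"
    then obtain d1 v1 d2 where "exec x l d1 v1" "exec x (f v1) d2 v" "d' = d1 + d2" using Ask.IH(1) by blast
    then have "exec x (Ask i j l r) (Suc d1) v1 \<and> exec x (f v1) d2 v \<and> d = Suc d1 + d2" using h by (auto intro: eL)
    then show ?thesis by blast
  next
    fix d' assume h: "d = Suc d'" "may_answer_ge x j i" "exec x (bindp r f) d' v"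
    then obtain d1 v1 d2 where "exec x r d1 v1" "exec x (f v1) d2 v" "d' = d1 + d2" using Ask.IH(2) by blast
    then have "exec x (Ask i j l r) (Suc d1) v1 \<and> exec x (f v1) d2 v \<and> d = Suc d1 + d2" using h by (auto intro: eR)
    then show ?thesis by blast
  qed
qed

fun qin :: "nat \<Rightarrow> 'a prog \<Rightarrow> bool" where
  "qin n (Ret a) = True"
| "qin n (Ask i j l r) = (i < n \<and> j < n \<and> qin n l \<and> qin n r)"

lemma qin_bind:
  "qin n p \<Longrightarrow> (\<And>d v. exec (\<lambda>_. 0) p d v \<Longrightarrow> qin n (f v)) \<Longrightarrow> qin n (bindp p f)"
proof (induction p)
  case (Ret a)
  then show ?case using eRet by force
next
  case (Ask i j l r)
  have m: "may_answer_ge (\<lambda>_. 0) a b" for a b by (simp add: may_answer_ge_def)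
  have "qin n (bindp l f)"
  proof (rule Ask.IH(1))
    show "qin n l" using Ask.prems by simp
    fix d v assume "exec (\<lambda>_. 0) l d v"
    then have "exec (\<lambda>_. 0) (Ask i j l r) (Suc d) v" using m by (blast intro: eL)
    then show "qin n (f v)" using Ask.prems(2) by blast
  qed
  moreover have "qin n (bindp r f)"
  proof (rule Ask.IH(2))
    show "qin n r" using Ask.prems by simp
    fix d v assume "exec (\<lambda>_. 0) r d v"
    then have "exec (\<lambda>_. 0) (Ask i j l r) (Suc d) v" using m by (blast intro: eR)
    then show "qin n (f v)" using Ask.prems(2) by blast
  qed
  ultimately show ?case using Ask.prems by simp
qed

fun to_dtree :: "nat list prog \<Rightarrow> dtree" where
  "to_dtree (Ret p) = Out p"
| "to_dtree (Ask i j l r) = Cmp i j (to_dtree l) (to_dtree r)"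

lemma run_exec: "run x t d p \<Longrightarrow> t = to_dtree q \<Longrightarrow> exec x q d p"
proof (induction arbitrary: q rule: run.induct)
  case (leaf x p)
  then show ?case by (cases q) (auto intro: eRet)
next
  case (left x i j l d p r)
  then show ?case by (cases q) (auto intro: eL)
next
  case (right x j i r d p l)
  then show ?case by (cases q) (auto intro: eR)
qed

lemma qin_dtree: "qin n q \<Longrightarrow> queries_in n (to_dtree q)"
  by (induction q) auto

lemma may_ge: "may_answer_ge x i j \<Longrightarrow> x j - 1 \<le> x i"
  unfolding may_answer_ge_def by auto

fun ptn :: "nat \<Rightarrow> nat list \<Rightarrow> (nat list \<times> nat list) prog" where
  "ptn m [] = Ret ([],[])"
| "ptn m (e#es) = Ask m e (bindp (ptn m es) (\<lambda>(L,U). Ret (e#L,U)))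
                          (bindp (ptn m es) (\<lambda>(L,U). Ret (L,e#U)))"

lemma ptn_spec:
  "exec x (ptn m es) d (L,U) \<Longrightarrow> d = length es \<and> mset L + mset U = mset es \<and>
     (\<forall>l\<in>set L. x l - 1 \<le> x m) \<and> (\<forall>u\<in>set U. x m - 1 \<le> x u)"
proof (induction es arbitrary: d L U)
  case Nil
  then show ?case by (auto elim: execRetE)
next
  case (Cons e es)
  from Cons.prems[simplified] show ?case
  proof (rule execAskE)
    fix d' assume eL: "d = Suc d'" "may_answer_ge x m e" "exec x (bindp (ptn m es) (\<lambda>(L,U). Ret (e#L,U))) d' (L,U)"
    then obtain d1 v1 d2 where a: "exec x (ptn m es) d1 v1" "exec x ((\<lambda>(L,U). Ret (e#L,U)) v1) d2 (L,U)" "d' = d1 + d2"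
      using exec_bind[OF eL(3)] by blast
    obtain L1 U1 where v: "v1 = (L1,U1)" by (cases v1)
    from a(2) v have "d2 = 0" "L = e#L1" "U = U1" by (auto elim: execRetE)
    with Cons.IH[OF a(1)[unfolded v]] a(3) eL may_ge show ?thesis by auto
  next
    fix d' assume eR: "d = Suc d'" "may_answer_ge x e m" "exec x (bindp (ptn m es) (\<lambda>(L,U). Ret (L,e#U))) d' (L,U)"
    then obtain d1 v1 d2 where a: "exec x (ptn m es) d1 v1" "exec x ((\<lambda>(L,U). Ret (L,e#U)) v1) d2 (L,U)" "d' = d1 + d2"
      using exec_bind[OF eR(3)] by blast
    obtain L1 U1 where v: "v1 = (L1,U1)" by (cases v1)
    from a(2) v have "d2 = 0" "L = L1" "U = e#U1" by (auto elim: execRetE)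
    with Cons.IH[OF a(1)[unfolded v]] a(3) eR may_ge show ?thesis by auto
  qed
qed

lemma ptn_qin: "m < n \<Longrightarrow> set es \<subseteq> {..<n} \<Longrightarrow> qin n (ptn m es)"
  by (induction es) (auto intro!: qin_bind split: prod.splits)



fun rr :: "nat list \<Rightarrow> (nat \<Rightarrow> nat \<Rightarrow> bool) prog" where
  "rr [] = Ret (\<lambda>a b. False)"
| "rr (t#ts) = bindp (ptn t ts) (\<lambda>(L,U). bindp (rr ts) (\<lambda>w. Ret (\<lambda>a b.
     if a = t then b \<in> set L else if b = t then a \<notin> set L else w a b)))"

lemma rr_spec:
  "exec x (rr T) d w \<Longrightarrow> distinct T \<Longrightarrow> 2*d = length T * (length T - 1) \<and>
    (\<forall>a\<in>set T. \<forall>b\<in>set T. a \<noteq> b \<longrightarrow> (w a b \<longleftrightarrow> \<not> w b a)) \<and>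
    (\<forall>a\<in>set T. \<forall>b\<in>set T. a \<noteq> b \<longrightarrow> w a b \<longrightarrow> x b - 1 \<le> x a)"
proof (induction T arbitrary: d w)
  case Nil
  then show ?case by (auto elim: execRetE)
next
  case (Cons t ts)
  from exec_bind[OF Cons.prems(1)[simplified]] obtain d1 v1 d2 where
    a: "exec x (ptn t ts) d1 v1" "exec x ((\<lambda>(L,U). bindp (rr ts) (\<lambda>w. Ret (\<lambda>a b.
     if a = t then b \<in> set L else if b = t then a \<notin> set L else w a b))) v1) d2 w" "d = d1 + d2"
    by blast
  obtain L U where v: "v1 = (L,U)" by (cases v1)
  from a(2) v have "exec x (bindp (rr ts) (\<lambda>w. Ret (\<lambda>a b.
     if a = t then b \<in> set L else if b = t then a \<notin> set L else w a b))) d2 w" by simp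
  from exec_bind[OF this] obtain d3 w3 d4 where b: "exec x (rr ts) d3 w3"
     "exec x (Ret (\<lambda>a b. if a = t then b \<in> set L else if b = t then a \<notin> set L else w3 a b)) d4 w" "d2 = d3 + d4"
    by blast
  from b(2) have d4: "d4 = 0" and w: "w = (\<lambda>a b. if a = t then b \<in> set L else if b = t then a \<notin> set L else w3 a b)"
    by (auto elim: execRetE)
  from ptn_spec[OF a(1)[unfolded v]] have p: "d1 = length ts" "mset L + mset U = mset ts"
    "\<forall>l\<in>set L. x l - 1 \<le> x t" "\<forall>u\<in>set U. x t - 1 \<le> x u" by auto
  have sLU: "set L \<union> set U = set ts" using p(2) by (metis set_mset_mset set_mset_union)
  from Cons.prems(2) have tn: "t \<notin> set ts" and dts: "distinct ts" by auto
  note IH = Cons.IH[OF b(1) dts]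
  have IHs: "\<And>a b. a\<in>set ts \<Longrightarrow> b\<in>set ts \<Longrightarrow> a \<noteq> b \<Longrightarrow> w3 a b \<Longrightarrow> x b - 1 \<le> x a"
    using IH by blast
  have IHt: "\<And>a b. a\<in>set ts \<Longrightarrow> b\<in>set ts \<Longrightarrow> a \<noteq> b \<Longrightarrow> w3 a b \<longleftrightarrow> \<not> w3 b a"
    using IH by blast
  have cost: "2*d = length (t#ts) * (length (t#ts) - 1)"
  proof -
    have "2*d = 2*length ts + length ts * (length ts - 1)" using IH a(3) b(3) d4 p(1) by simp
    also have "\<dots> = length (t#ts) * (length (t#ts) - 1)" by (cases "length ts") auto
    finally show ?thesis .
  qed
  have tour: "\<forall>a\<in>set (t#ts). \<forall>b\<in>set (t#ts). a \<noteq> b \<longrightarrow> (w a b \<longleftrightarrow> \<not> w b a)"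
  proof (intro ballI impI)
    fix a b assume ab: "a \<in> set (t#ts)" "b \<in> set (t#ts)" "a \<noteq> b"
    show "w a b \<longleftrightarrow> \<not> w b a"
    proof (cases "a = t")
      case True
      then show ?thesis using ab(3) unfolding w by simp
    next
      case False
      note aF = this
      show ?thesis
      proof (cases "b = t")
        case True
        then show ?thesis using aF unfolding w by simp
      next
        case False
        then have "a \<in> set ts" "b \<in> set ts" using ab aF by auto
        then have "w3 a b \<longleftrightarrow> \<not> w3 b a" using IHt ab(3) by blast
        then show ?thesis using aF False unfolding w by simp
      qed
    qed
  qed
  have snd: "\<forall>a\<in>set (t#ts). \<forall>b\<in>set (t#ts). a \<noteq> b \<longrightarrow> w a b \<longrightarrow> x b - 1 \<le> x a"
  proof (intro ballI impI)
    fix a b assume ab: "a \<in> set (t#ts)" "b \<in> set (t#ts)" "a \<noteq> b" "w a b"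
    show "x b - 1 \<le> x a"
    proof (cases "a = t")
      case True
      then have "b \<in> set L" using ab w by simp
      then show ?thesis using p(3) True by auto
    next
      case False
      note aF = False
      show ?thesis
      proof (cases "b = t")
        case True
        then have "a \<notin> set L" "a \<in> set ts" using ab w aF by auto
        then have "a \<in> set U" using sLU by auto
        then show ?thesis using p(4) True by auto
      next
        case False
        then have "w3 a b" "a \<in> set ts" "b \<in> set ts" using ab w aF by auto
        then show ?thesis using IHs ab(3) by blast
      qed
    qed
  qed
  show ?case using cost tour snd by blast
qed

lemma rr_qin: "set T \<subseteq> {..<n} \<Longrightarrow> qin n (rr T)"
proof (induction T)
  case Nil
  then show ?case by simp
next
  case (Cons t ts)
  show ?case unfolding rr.simps
    by (rule qin_bind) (use Cons in \<open>auto intro!: ptn_qin qin_bind split: prod.splits\<close>)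
qed

lemma tour_sum:
  assumes "finite Y" "\<forall>a\<in>Y. \<forall>b\<in>Y. a \<noteq> b \<longrightarrow> (w a b \<longleftrightarrow> \<not> w b a)"
  shows "2 * (\<Sum>a\<in>Y. card {b\<in>Y. b \<noteq> a \<and> w a b}) = card Y * (card Y - 1)"
  using assms
proof (induction Y rule: finite_induct)
  case empty
  then show ?case by simp
next
  case (insert c Y)
  have tY: "\<forall>a\<in>Y. \<forall>b\<in>Y. a \<noteq> b \<longrightarrow> (w a b \<longleftrightarrow> \<not> w b a)" using insert.prems by blast
  note IH = insert.IH[OF tY]
  have e1: "card {b\<in>insert c Y. b \<noteq> a \<and> w a b} = card {b\<in>Y. b \<noteq> a \<and> w a b} + (if w a c then 1 else 0)"
    if "a \<in> Y" for a
  proof -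
    have "a \<noteq> c" using that insert.hyps by auto
    show ?thesis
    proof (cases "w a c")
      case True
      then have "{b\<in>insert c Y. b \<noteq> a \<and> w a b} = insert c {b\<in>Y. b \<noteq> a \<and> w a b}" using \<open>a \<noteq> c\<close> by auto
      then show ?thesis using True insert.hyps by simp
    next
      case False
      then have "{b\<in>insert c Y. b \<noteq> a \<and> w a b} = {b\<in>Y. b \<noteq> a \<and> w a b}" by auto
      then show ?thesis using False by simp
    qed
  qed
  have e2: "{b\<in>insert c Y. b \<noteq> c \<and> w c b} = {b\<in>Y. w c b}" using insert.hyps by auto
  have e3: "(\<Sum>a\<in>Y. (if w a c then 1 else 0::nat)) = card {a\<in>Y. \<not> w c a}"
  proof -
    have "(\<Sum>a\<in>Y. (if w a c then 1 else 0::nat)) = card {a\<in>Y. w a c}"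
      using insert.hyps by (simp add: sum.If_cases Int_def)
    also have "{a\<in>Y. w a c} = {a\<in>Y. \<not> w c a}" using insert.prems insert.hyps by auto
    finally show ?thesis .
  qed
  have e4: "card {b\<in>Y. w c b} + card {a\<in>Y. \<not> w c a} = card Y"
  proof -
    have "card {b\<in>Y. w c b} + card {a\<in>Y. \<not> w c a} = card ({b\<in>Y. w c b} \<union> {a\<in>Y. \<not> w c a})"
      by (rule card_Un_disjoint[symmetric]) (use insert.hyps in auto)
    also have "{b\<in>Y. w c b} \<union> {a\<in>Y. \<not> w c a} = Y" by auto
    finally show ?thesis .
  qed
  have "(\<Sum>a\<in>insert c Y. card {b\<in>insert c Y. b \<noteq> a \<and> w a b})
        = card {b\<in>Y. w c b} + (\<Sum>a\<in>Y. card {b\<in>insert c Y. b \<noteq> a \<and> w a b})"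
    using insert.hyps e2 by simp
  also have "(\<Sum>a\<in>Y. card {b\<in>insert c Y. b \<noteq> a \<and> w a b}) =
       (\<Sum>a\<in>Y. card {b\<in>Y. b \<noteq> a \<and> w a b}) + (\<Sum>a\<in>Y. (if w a c then 1 else 0::nat))"
    using e1 by (simp add: sum.distrib)
  finally have "(\<Sum>a\<in>insert c Y. card {b\<in>insert c Y. b \<noteq> a \<and> w a b})
     = card Y + (\<Sum>a\<in>Y. card {b\<in>Y. b \<noteq> a \<and> w a b})" using e3 e4 by simp
  then show ?case using IH insert.hyps by (cases "card Y") (auto simp: algebra_simps)
qed

lemma low_card:
  assumes fin: "finite X" and tour: "\<forall>a\<in>X. \<forall>b\<in>X. a \<noteq> b \<longrightarrow> (w a b \<longleftrightarrow> \<not> w b a)" and q: "q \<ge> 1"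
  shows "card {a\<in>X. card {b\<in>X. b \<noteq> a \<and> w a b} < q} \<le> 2*q - 1"
proof -
  define Lo where "Lo = {a\<in>X. card {b\<in>X. b \<noteq> a \<and> w a b} < q}"
  have fL: "finite Lo" unfolding Lo_def using fin by simp
  have tL: "\<forall>a\<in>Lo. \<forall>b\<in>Lo. a \<noteq> b \<longrightarrow> (w a b \<longleftrightarrow> \<not> w b a)" using tour unfolding Lo_def by blast
  have le: "card {b\<in>Lo. b \<noteq> a \<and> w a b} \<le> q - 1" if "a \<in> Lo" for a
  proof -
    have "card {b\<in>Lo. b \<noteq> a \<and> w a b} \<le> card {b\<in>X. b \<noteq> a \<and> w a b}"
      by (rule card_mono) (use fin in \<open>auto simp: Lo_def\<close>)
    moreover have "card {b\<in>X. b \<noteq> a \<and> w a b} < q" using that unfolding Lo_def by blast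
    ultimately show ?thesis by linarith
  qed
  have "card Lo * (card Lo - 1) = 2 * (\<Sum>a\<in>Lo. card {b\<in>Lo. b \<noteq> a \<and> w a b})"
    using tour_sum[OF fL tL] by simp
  also have "\<dots> \<le> 2 * (\<Sum>a\<in>Lo. (q - 1))" using le by (intro mult_le_mono2 sum_mono) auto
  also have "\<dots> = 2 * card Lo * (q - 1)" by simp
  finally have "card Lo * (card Lo - 1) \<le> card Lo * (2 * (q - 1))" by simp
  then have "card Lo = 0 \<or> card Lo - 1 \<le> 2*(q-1)" by auto
  then show ?thesis using q unfolding Lo_def[symmetric] by auto
qed

definition good :: "nat \<Rightarrow> nat list \<Rightarrow> (nat \<Rightarrow> nat \<Rightarrow> bool) \<Rightarrow> nat \<Rightarrow> bool" where
  "good q T w m \<longleftrightarrow> q \<le> card {b\<in>set T. b \<noteq> m \<and> w m b} \<and> q \<le> card {b\<in>set T. b \<noteq> m \<and> \<not> w m b}"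

lemma good_exists:
  assumes tour: "\<forall>a\<in>set T. \<forall>b\<in>set T. a \<noteq> b \<longrightarrow> (w a b \<longleftrightarrow> \<not> w b a)"
    and ne: "T \<noteq> []" and dT: "distinct T" and len: "4*q \<le> length T + 1"
  shows "\<exists>m\<in>set T. good q T w m"
proof (cases "q = 0")
  case True
  then show ?thesis using ne unfolding good_def by (cases T) auto
next
  case False
  then have q: "q \<ge> 1" by simp
  define X where "X = set T"
  have fX: "finite X" using X_def by simp
  have cX: "card X = length T" unfolding X_def by (rule distinct_card[OF dT])
  have tX: "\<forall>a\<in>X. \<forall>b\<in>X. a \<noteq> b \<longrightarrow> (w a b \<longleftrightarrow> \<not> w b a)" unfolding X_def by (rule tour)
  define w' where "w' = (\<lambda>a b. \<not> w a b)"
  have tX': "\<forall>a\<in>X. \<forall>b\<in>X. a \<noteq> b \<longrightarrow> (w' a b \<longleftrightarrow> \<not> w' b a)" unfolding w'_def using tX by blast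
  define Lo where "Lo = {a\<in>X. card {b\<in>X. b \<noteq> a \<and> w a b} < q}"
  define Hi where "Hi = {a\<in>X. card {b\<in>X. b \<noteq> a \<and> w' a b} < q}"
  have cL: "card Lo \<le> 2*q - 1" unfolding Lo_def by (rule low_card[OF fX tX q])
  have cH: "card Hi \<le> 2*q - 1" unfolding Hi_def by (rule low_card[OF fX tX' q])
  have "card (Lo \<union> Hi) \<le> card Lo + card Hi" by (rule card_Un_le)
  also have "\<dots> < card X" using cL cH cX len q by linarith
  finally have lt: "card (Lo \<union> Hi) < card X" .
  have "\<not> X \<subseteq> Lo \<union> Hi"
  proof
    assume "X \<subseteq> Lo \<union> Hi"
    then have "card X \<le> card (Lo \<union> Hi)" by (intro card_mono) (use fX Lo_def Hi_def in auto)
    with lt show False by simp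
  qed
  then obtain m where "m \<in> X" "m \<notin> Lo" "m \<notin> Hi" by auto
  then have "good q T w m" unfolding good_def by (simp add: Lo_def Hi_def w'_def X_def not_less)
  then show ?thesis using \<open>m \<in> X\<close> X_def by blast
qed



definition qf :: "nat \<Rightarrow> nat" where "qf N = nat \<lfloor>sqrt (real N) / 3\<rfloor>"
definition sf :: "nat \<Rightarrow> nat" where "sf q = (if q = 0 then 1 else 4*q - 1)"
definition B :: "nat \<Rightarrow> real" where "B N = 4 * real N * sqrt (real N)"

lemma tangent0:
  fixes m n :: real assumes "0 \<le> m" "0 \<le> n"
  shows "m^2 * m + 3/2 * m * (n^2 - m^2) \<le> n^2 * n"
proof -
  have "n^2 * n - (m^2 * m + 3/2 * m * (n^2 - m^2)) = (n - m)^2 * (n + m/2)"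
    by (simp add: power2_eq_square field_simps)
  also have "\<dots> \<ge> 0" using assms by simp
  finally show ?thesis by simp
qed

lemma tangent:
  fixes M N :: real assumes "0 \<le> M" "0 \<le> N"
  shows "M * sqrt M + 3/2 * sqrt M * (N - M) \<le> N * sqrt N"
  using tangent0[of "sqrt M" "sqrt N"] assms by simp

lemma conv_aux:
  fixes q a b :: real assumes "0 \<le> q" "q \<le> a" "a \<le> b"
  shows "a * sqrt a + b * sqrt b \<le> q * sqrt q + (a + b - q) * sqrt (a + b - q)"
proof -
  define u where "u = a - q"
  have u: "u \<ge> 0" using assms u_def by simp
  have t1: "b * sqrt b + 3/2 * (sqrt b * u) \<le> (b + u) * sqrt (b + u)"
    using tangent[of b "b+u"] assms u by (simp add: mult.assoc)
  have e: "3/2 * sqrt a * (q - a) = - (3/2 * (sqrt a * u))" unfolding u_def by (simp add: field_simps)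
  have t2: "a * sqrt a - 3/2 * (sqrt a * u) \<le> q * sqrt q"
  proof -
    have "a * sqrt a + 3/2 * sqrt a * (q - a) \<le> q * sqrt q" using tangent[of a q] assms by simp
    then show ?thesis unfolding e by simp
  qed
  have s: "sqrt a \<le> sqrt b" using assms by simp
  have m: "sqrt a * u \<le> sqrt b * u" using s u by (simp add: mult_right_mono)
  have e2: "a + b - q = b + u" using u_def by simp
  have "(a + b - q) * sqrt (a + b - q) = (b + u) * sqrt (b + u)" by (simp only: e2)
  then show ?thesis using t1 t2 m by linarith
qed

lemma conv:
  fixes q a b :: real assumes "0 \<le> q" "q \<le> a" "q \<le> b"
  shows "a * sqrt a + b * sqrt b \<le> q * sqrt q + (a + b - q) * sqrt (a + b - q)"
proof (cases "a \<le> b")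
  case True
  then show ?thesis using conv_aux assms by blast
next
  case False
  then show ?thesis using conv_aux[of q b a] assms by (simp add: add.commute)
qed

lemma qf_bounds: "real (qf N) \<le> sqrt (real N) / 3" "sqrt (real N) / 3 < real (qf N) + 1"
proof -
  have nn: "0 \<le> sqrt (real N) / 3" by simp
  then have f: "0 \<le> \<lfloor>sqrt (real N) / 3\<rfloor>" by simp
  have "real (qf N) = real_of_int \<lfloor>sqrt (real N) / 3\<rfloor>" unfolding qf_def using f by simp
  moreover have "real_of_int \<lfloor>sqrt (real N) / 3\<rfloor> \<le> sqrt (real N) / 3" by (rule of_int_floor_le)
  moreover have "sqrt (real N) / 3 < real_of_int (\<lfloor>sqrt (real N) / 3\<rfloor> + 1)" using floor_correct by blast
  ultimately show "real (qf N) \<le> sqrt (real N) / 3" "sqrt (real N) / 3 < real (qf N) + 1"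
    by simp_all
qed

lemma sf_le: assumes "1 \<le> N" shows "sf (qf N) \<le> N"
proof (cases "qf N = 0")
  case True
  then show ?thesis using assms by (simp add: sf_def)
next
  case False
  define r where "r = sqrt (real N)"
  have q1: "real (qf N) \<ge> 1" using False by simp
  have r3: "r \<ge> 3" using qf_bounds(1)[of N] q1 r_def by simp
  have "real N = r * r" using r_def by simp
  moreover have "4 * real (qf N) \<le> 4 * r / 3" using qf_bounds(1)[of N] r_def by simp
  moreover have "4 * r / 3 \<le> r * r"
  proof -
    have "3 * r \<le> r * r" using r3 mult_right_mono[of 3 r r] by simp
    then show ?thesis using r3 by linarith
  qed
  ultimately have "real (4 * qf N) \<le> real N" by simp
  then have "4 * qf N \<le> N" by linarith
  then show ?thesis using False by (simp add: sf_def)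
qed

lemma cost_bound:
  assumes N1: "1 \<le> N" and ab: "a + b + 1 = N" and qa: "qf N \<le> a" and qb: "qf N \<le> b"
  shows "real (sf (qf N) * (sf (qf N) - 1) div 2 + (N - sf (qf N))) + B a + B b \<le> B N"
proof -
  define q where "q = qf N"
  define s where "s = sf q"
  define r where "r = sqrt (real N)"
  define M where "M = real N - 1 - real q"
  have r0: "r \<ge> 0" using r_def by simp
  have rN: "r * r = real N" using r_def by simp
  have qr: "3 * real q \<le> r" "r < 3 * real q + 3" using qf_bounds[of N] q_def r_def by auto
  have sN: "s \<le> N" using sf_le[OF N1] s_def q_def by simp
  have M_eq: "M = real a + real b - real q" using ab M_def by (simp add: algebra_simps flip: of_nat_add)
  have M0: "M \<ge> real q" using M_eq qa qb q_def by simp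
  have cv: "real a * sqrt a + real b * sqrt b \<le> real q * sqrt q + M * sqrt M"
    using conv[of "real q" "real a" "real b"] qa qb q_def M_eq by simp
  have tg: "M * sqrt M + 3/2 * sqrt M * (real q + 1) \<le> real N * sqrt N"
  proof -
    have "M * sqrt M + 3/2 * sqrt M * (real N - M) \<le> real N * sqrt N"
      by (rule tangent) (use M0 in auto)
    moreover have "real N - M = real q + 1" using M_def by simp
    ultimately show ?thesis by simp
  qed
  define c where "c = real (s * (s - 1) div 2 + (N - s))"
  have key: "c + 4 * real q * sqrt q \<le> 6 * (real q + 1) * sqrt M"
  proof (cases "q = 0")
    case True
    then have s1: "s = 1" using s_def sf_def by simp
    have c: "c = M" using s1 True N1 unfolding c_def M_def by (simp add: of_nat_diff)
    have "r < 3" using qr True by simp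
    then have "r * r \<le> r * 3" using r0 mult_left_mono[of r 3 r] by simp
    then have "real N < 9" using rN \<open>r < 3\<close> by linarith
    then have "M \<le> 9" using M_def by simp
    then have sM: "sqrt M \<le> 3" using real_sqrt_le_mono[of M 9] by simp
    have M00: "M \<ge> 0" using M0 by simp
    have "M = sqrt M * sqrt M" using M00 by simp
    also have "\<dots> \<le> 6 * sqrt M" using sM M00 by (intro mult_right_mono) auto
    finally show ?thesis using c True by simp
  next
    case False
    then have q1: "real q \<ge> 1" by simp
    have s4: "s = 4*q - 1" using False s_def sf_def by simp
    have "s * (s - 1) = 2 * ((4*q - 1) * (2*q - 1))" using s4 False
      by (cases q) (auto simp: algebra_simps)
    then have sdiv: "s * (s - 1) div 2 = (4*q - 1) * (2*q - 1)" by simp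
    have c: "c = (4 * real q - 1) * (2 * real q - 1) + real N - (4 * real q - 1)"
      unfolding c_def sdiv using False sN s4 by (simp add: of_nat_diff)
    have r3: "r \<ge> 3" using qr q1 by simp
    have "M \<ge> (r - 1/2)^2" using M_def rN qr r3 by (simp add: power2_eq_square algebra_simps)
    then have sM: "sqrt M \<ge> r - 1/2" using r3 real_sqrt_le_mono[of "(r-1/2)^2" M] by simp
    have qq: "4 * real q * sqrt q \<le> real q ^ 2 + 4 * real q"
    proof -
      have "0 \<le> real q * (sqrt q - 2)^2" by simp
      also have "\<dots> = real q ^ 2 - 4 * real q * sqrt q + 4 * real q"
        by (simp add: power2_eq_square algebra_simps)
      finally show ?thesis by simp
    qed
    define t where "t = r - 3 * real q"
    have t: "0 \<le> t" "t < 3" using qr t_def by auto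
    have poly: "6 * (real q + 1) * (r - 1/2) - (c + real q ^ 2 + 4 * real q) = 21 * real q + 6 * t - 5 - t^2"
    proof -
      have rt: "r = 3 * real q + t" using t_def by simp
      show ?thesis unfolding c rN[symmetric] rt by (simp add: power2_eq_square algebra_simps)
    qed
    have "t^2 \<le> 6 * t" using t by (simp add: power2_eq_square mult_right_mono)
    then have "c + real q ^ 2 + 4 * real q \<le> 6 * (real q + 1) * (r - 1/2)" using poly q1 by linarith
    also have "\<dots> \<le> 6 * (real q + 1) * sqrt M" using sM q1 by (intro mult_left_mono) auto
    finally show ?thesis using qq by linarith
  qed
  have "real (s * (s - 1) div 2 + (N - s)) + B a + B b = c + 4 * (real a * sqrt a + real b * sqrt b)"
    unfolding B_def c_def by (simp add: algebra_simps)
  also have "\<dots> \<le> c + 4 * (real q * sqrt q + M * sqrt M)" using cv by simp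
  also have "\<dots> \<le> 4 * (real N * sqrt N)" 
  proof -
    define X where "X = real q * sqrt q"
    define Y where "Y = M * sqrt M"
    define Z where "Z = sqrt M * (real q + 1)"
    define W where "W = real N * sqrt N"
    have k: "c + 4 * X \<le> 6 * Z" using key unfolding X_def Z_def by (simp add: algebra_simps)
    have g: "Y + 3/2 * Z \<le> W" using tg unfolding Y_def Z_def W_def by simp
    have "c + 4 * X + 4 * Y \<le> 4 * W" using k g by linarith
    then show ?thesis unfolding X_def Y_def W_def by (simp add: algebra_simps)
  qed
  finally show ?thesis unfolding B_def s_def q_def by (simp add: algebra_simps)
qed



definition pick :: "nat \<Rightarrow> nat list \<Rightarrow> (nat \<Rightarrow> nat \<Rightarrow> bool) \<Rightarrow> nat" where
  "pick q T w = (if \<exists>m\<in>set T. good q T w m then SOME m. m \<in> set T \<and> good q T w m else hd T)"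

lemma pick_both: "\<exists>m\<in>set T. good q T w m \<Longrightarrow> pick q T w \<in> set T \<and> good q T w (pick q T w)"
proof -
  assume e: "\<exists>m\<in>set T. good q T w m"
  then have "\<exists>m. m \<in> set T \<and> good q T w m" by blast
  then have "(SOME m. m \<in> set T \<and> good q T w m) \<in> set T \<and> good q T w (SOME m. m \<in> set T \<and> good q T w m)"
    by (rule someI_ex)
  then show ?thesis using e unfolding pick_def by simp
qed

lemma pick_good: "\<exists>m\<in>set T. good q T w m \<Longrightarrow> good q T w (pick q T w)"
  using pick_both by blast

lemma pick_in: "T \<noteq> [] \<Longrightarrow> pick q T w \<in> set T"
proof (cases "\<exists>m\<in>set T. good q T w m")
  case True
  then show ?thesis using pick_both by blast
next
  case False
  assume "T \<noteq> []"
  then show ?thesis using False unfolding pick_def by simp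
qed

definition Tof :: "nat list \<Rightarrow> nat list" where "Tof S = take (sf (qf (length S))) S"
definition Rof :: "nat list \<Rightarrow> nat list" where "Rof S = drop (sf (qf (length S))) S"
definition piv :: "nat list \<Rightarrow> (nat \<Rightarrow> nat \<Rightarrow> bool) \<Rightarrow> nat" where
  "piv S w = pick (qf (length S)) (Tof S) w"
definition lows :: "nat \<Rightarrow> (nat \<Rightarrow> nat \<Rightarrow> bool) \<Rightarrow> nat list \<Rightarrow> nat list" where
  "lows m w T = filter (\<lambda>b. b \<noteq> m \<and> w m b) T"
definition highs :: "nat \<Rightarrow> (nat \<Rightarrow> nat \<Rightarrow> bool) \<Rightarrow> nat list \<Rightarrow> nat list" where
  "highs m w T = filter (\<lambda>b. b \<noteq> m \<and> \<not> w m b) T"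

primrec qs :: "nat \<Rightarrow> nat list \<Rightarrow> nat list prog" where
  "qs 0 S = Ret S"
| "qs (Suc f) S = (if S = [] then Ret [] else
    bindp (rr (Tof S)) (\<lambda>w.
     bindp (ptn (piv S w) (Rof S)) (\<lambda>(L,U).
      bindp (qs f (lows (piv S w) w (Tof S) @ L)) (\<lambda>pl.
       bindp (qs f (highs (piv S w) w (Tof S) @ U)) (\<lambda>pu. Ret (pl @ piv S w # pu))))))"

lemma ptn_sets:
  assumes "mset L + mset U = mset R" "distinct R"
  shows "distinct L" "distinct U" "set L \<inter> set U = {}" "set L \<union> set U = set R"
proof -
  have m: "mset (L @ U) = mset R" using assms by simp
  then have "distinct (L @ U)" using assms(2) mset_eq_imp_distinct_iff by blast
  then show "distinct L" "distinct U" "set L \<inter> set U = {}" by auto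
  show "set L \<union> set U = set R" using mset_eq_setD[OF m] by simp
qed

lemma qs_qin: "set S \<subseteq> {..<n} \<Longrightarrow> qin n (qs f S)"
proof (induction f arbitrary: S)
  case 0
  then show ?case by simp
next
  case (Suc f)
  show ?case
  proof (cases "S = []")
    case True
    then show ?thesis by simp
  next
    case False
    have TS: "set (Tof S) \<subseteq> set S" "set (Rof S) \<subseteq> set S" unfolding Tof_def Rof_def
      by (auto dest: in_set_takeD in_set_dropD)
    have Tne: "Tof S \<noteq> []" using False unfolding Tof_def sf_def by simp
    have pin: "piv S w \<in> set S" for w using pick_in[OF Tne] TS unfolding piv_def by blast
    show ?thesis using False
      apply simp
      apply (rule qin_bind)
       apply (rule rr_qin) using TS Suc.prems apply blast
      apply (rule qin_bind)
       apply (rule ptn_qin) using pin Suc.prems TS apply blast using pin Suc.prems TS apply blast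
      subgoal for d1 w d2 v
      proof -
        assume ex: "exec (\<lambda>_. 0) (ptn (piv S w) (Rof S)) d2 v"
        obtain L U where v: "v = (L,U)" by (cases v)
        have "mset L + mset U = mset (Rof S)" using ptn_spec[OF ex[unfolded v]] by simp
        then have LU: "set L \<subseteq> set (Rof S)" "set U \<subseteq> set (Rof S)"
          by (metis Un_upper1 Un_upper2 set_mset_mset set_mset_union)+
        have l: "set (lows (piv S w) w (Tof S)) \<subseteq> set S" "set (highs (piv S w) w (Tof S)) \<subseteq> set S"
          using TS unfolding lows_def highs_def by auto
        show ?thesis unfolding v
          apply simp
          apply (rule qin_bind)
           apply (rule Suc.IH) using LU l TS Suc.prems apply auto[1]
          apply (rule qin_bind)
           apply (rule Suc.IH) using LU l TS Suc.prems apply auto[1]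
          by simp
      qed
      done
  qed
qed

lemma qs_spec:
  "exec x (qs f S) d p \<Longrightarrow> distinct S \<Longrightarrow> length S \<le> f \<Longrightarrow>
     distinct p \<and> set p = set S \<and> sorted_wrt (\<lambda>a b. x a - 2 \<le> x b) p \<and> real d \<le> B (length S)"
proof (induction f arbitrary: S d p)
  case 0
  then have "S = []" by simp
  with 0 show ?case by (auto elim: execRetE simp: B_def)
next
  case (Suc f)
  show ?case
  proof (cases "S = []")
    case True
    with Suc.prems show ?thesis by (auto elim: execRetE simp: B_def)
  next
    case False
    define N where "N = length S"
    define q where "q = qf N"
    define s where "s = sf q"
    define T where "T = Tof S"
    define R where "R = Rof S"
    have N1: "1 \<le> N" using False N_def by (cases S) auto
    have sN: "s \<le> N" using sf_le[OF N1] s_def q_def by simp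
    have T_eq: "T = take s S" and R_eq: "R = drop s S" unfolding T_def R_def Tof_def Rof_def s_def q_def N_def by simp_all
    have lT: "length T = s" using T_eq sN N_def by simp
    have lR: "length R = N - s" using R_eq N_def by simp
    have ST: "S = T @ R" using T_eq R_eq by simp
    have dS: "distinct S" using Suc.prems by simp
    then have dT: "distinct T" and dR: "distinct R" and TR: "set T \<inter> set R = {}" using ST by (metis distinct_append)+
    have s1: "s \<ge> 1" unfolding s_def sf_def by auto
    have Tne: "T \<noteq> []" using lT s1 by auto
    have s4: "4 * q \<le> length T + 1" using lT unfolding s_def sf_def by auto
    from Suc.prems(1) False have e0: "exec x (bindp (rr (Tof S)) (\<lambda>w.
     bindp (ptn (piv S w) (Rof S)) (\<lambda>(L,U).
      bindp (qs f (lows (piv S w) w (Tof S) @ L)) (\<lambda>pl.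
       bindp (qs f (highs (piv S w) w (Tof S) @ U)) (\<lambda>pu. Ret (pl @ piv S w # pu)))))) d p" by simp
    from exec_bind[OF e0] obtain d1 w da where
      e1: "exec x (rr (Tof S)) d1 w" and
      e1': "exec x (bindp (ptn (piv S w) (Rof S)) (\<lambda>(L,U).
      bindp (qs f (lows (piv S w) w (Tof S) @ L)) (\<lambda>pl.
       bindp (qs f (highs (piv S w) w (Tof S) @ U)) (\<lambda>pu. Ret (pl @ piv S w # pu))))) da p"
      and dd1: "d = d1 + da" by blast
    define m where "m = piv S w"
    have m_def': "m = pick q T w" unfolding m_def piv_def q_def N_def T_def ..
    note rrs = rr_spec[OF e1[folded T_def] dT]
    have c1: "2*d1 = s * (s - 1)" using conjunct1[OF rrs] lT by simp
    have tour: "\<forall>a\<in>set T. \<forall>b\<in>set T. a \<noteq> b \<longrightarrow> (w a b \<longleftrightarrow> \<not> w b a)"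
      using conjunct1[OF conjunct2[OF rrs]] .
    have snd: "\<forall>a\<in>set T. \<forall>b\<in>set T. a \<noteq> b \<longrightarrow> w a b \<longrightarrow> x b - 1 \<le> x a"
      using conjunct2[OF conjunct2[OF rrs]] .
    have gex: "\<exists>m\<in>set T. good q T w m" by (rule good_exists[OF tour Tne dT s4])
    have mT: "m \<in> set T" and mg: "good q T w m" using pick_both[OF gex] m_def' by auto
    from exec_bind[OF e1'[folded m_def T_def R_def]] obtain d2 v db where
      e2: "exec x (ptn m R) d2 v" and
      e2': "exec x ((\<lambda>(L,U). bindp (qs f (lows m w T @ L)) (\<lambda>pl.
       bindp (qs f (highs m w T @ U)) (\<lambda>pu. Ret (pl @ m # pu)))) v) db p" and
      dd2: "da = d2 + db" by blast
    obtain L U where v: "v = (L,U)" by (cases v)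
    from ptn_spec[OF e2[unfolded v]] have c2: "d2 = length R" and LUm: "mset L + mset U = mset R"
      and Ls: "\<forall>l\<in>set L. x l - 1 \<le> x m" and Us: "\<forall>u\<in>set U. x m - 1 \<le> x u" by auto
    note LU = ptn_sets[OF LUm dR]
    define CL where "CL = lows m w T @ L"
    define CU where "CU = highs m w T @ U"
    from e2' v have e3: "exec x (bindp (qs f CL) (\<lambda>pl. bindp (qs f CU) (\<lambda>pu. Ret (pl @ m # pu)))) db p"
      unfolding CL_def CU_def by simp
    from exec_bind[OF e3] obtain d3 pl dc where e3a: "exec x (qs f CL) d3 pl" and
      e3b: "exec x (bindp (qs f CU) (\<lambda>pu. Ret (pl @ m # pu))) dc p" and dd3: "db = d3 + dc" by blast
    from exec_bind[OF e3b] obtain d4 pu d5 where e4: "exec x (qs f CU) d4 pu" and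
      e5: "exec x (Ret (pl @ m # pu)) d5 p" and dd4: "dc = d4 + d5" by blast
    from e5 have p: "p = pl @ m # pu" and d5: "d5 = 0" by (auto elim: execRetE)
    have slo: "set (lows m w T) = {b\<in>set T. b \<noteq> m \<and> w m b}" unfolding lows_def by auto
    have shi: "set (highs m w T) = {b\<in>set T. b \<noteq> m \<and> \<not> w m b}" unfolding highs_def by auto
    have dlo: "distinct (lows m w T)" "distinct (highs m w T)" using dT unfolding lows_def highs_def by auto
    have dCL: "distinct CL" unfolding CL_def using dlo LU TR slo by auto
    have dCU: "distinct CU" unfolding CU_def using dlo LU TR shi by auto
    have sCL: "set CL = {b\<in>set T. b \<noteq> m \<and> w m b} \<union> set L" unfolding CL_def using slo by simp
    have sCU: "set CU = {b\<in>set T. b \<noteq> m \<and> \<not> w m b} \<union> set U" unfolding CU_def using shi by simp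
    have mCL: "m \<notin> set CL" using sCL TR mT LU by auto
    have mCU: "m \<notin> set CU" using sCU TR mT LU by auto
    have CLU: "set CL \<inter> set CU = {}" using sCL sCU LU TR by auto
    have allset: "set CL \<union> {m} \<union> set CU = set S" using sCL sCU LU mT ST by auto
    have dall: "distinct (CL @ m # CU)" using dCL dCU mCL mCU CLU by auto
    have lsum: "length CL + length CU + 1 = N"
    proof -
      have "length (CL @ m # CU) = card (set (CL @ m # CU))" using distinct_card[OF dall] by simp
      also have "set (CL @ m # CU) = set S" using allset by auto
      also have "card (set S) = N" using distinct_card[OF dS] N_def by simp
      finally show ?thesis by simp
    qed
    have lCL: "length CL \<le> f" "length CU \<le> f" using lsum Suc.prems(3) N_def by auto
    note IH1 = Suc.IH[OF e3a dCL lCL(1)]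
    note IH2 = Suc.IH[OF e4 dCU lCL(2)]
    have qCL: "q \<le> length CL"
    proof -
      have "q \<le> card {b\<in>set T. b \<noteq> m \<and> w m b}" using mg unfolding good_def by simp
      also have "\<dots> = length (lows m w T)" using distinct_card[OF dlo(1)] slo by simp
      also have "\<dots> \<le> length CL" unfolding CL_def by simp
      finally show ?thesis .
    qed
    have qCU: "q \<le> length CU"
    proof -
      have "q \<le> card {b\<in>set T. b \<noteq> m \<and> \<not> w m b}" using mg unfolding good_def by simp
      also have "\<dots> = length (highs m w T)" using distinct_card[OF dlo(2)] shi by simp
      also have "\<dots> \<le> length CU" unfolding CU_def by simp
      finally show ?thesis .
    qed
    have belowm: "\<forall>a\<in>set CL. x a - 1 \<le> x m"
    proof
      fix a assume "a \<in> set CL"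
      then consider "a \<in> set T" "a \<noteq> m" "w m a" | "a \<in> set L" using sCL by auto
      then show "x a - 1 \<le> x m"
      proof cases
        case 1
        then have ma: "m \<noteq> a" by auto
        show ?thesis using snd[rule_format, OF mT 1(1) ma 1(3)] .
      next
        case 2 then show ?thesis using Ls by blast
      qed
    qed
    have abovem: "\<forall>b\<in>set CU. x m - 1 \<le> x b"
    proof
      fix b assume "b \<in> set CU"
      then consider "b \<in> set T" "b \<noteq> m" "\<not> w m b" | "b \<in> set U" using sCU by auto
      then show "x m - 1 \<le> x b"
      proof cases
        case 1
        then have "w b m" using tour[rule_format, OF 1(1) mT 1(2)] 1(3) by blast
        then show ?thesis using snd[rule_format, OF 1(1) mT 1(2)] by blast
      next
        case 2 then show ?thesis using Us by blast
      qed
    qed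
    have spl: "set pl = set CL" and spu: "set pu = set CU" using IH1 IH2 by auto
    have sorted: "sorted_wrt (\<lambda>a b. x a - 2 \<le> x b) p"
    proof -
      have s1: "sorted_wrt (\<lambda>a b. x a - 2 \<le> x b) pl" and s2: "sorted_wrt (\<lambda>a b. x a - 2 \<le> x b) pu"
        using IH1 IH2 by auto
      have c1: "\<forall>a\<in>set pl. x a - 2 \<le> x m" using belowm spl by force
      have c2: "\<forall>b\<in>set pu. x m - 2 \<le> x b" using abovem spu by force
      have c3: "\<forall>a\<in>set pl. \<forall>b\<in>set pu. x a - 2 \<le> x b" using belowm abovem spl spu by force
      show ?thesis unfolding p sorted_wrt_append using s1 s2 c1 c2 c3 by simp
    qed
    have dp: "distinct p" and sp: "set p = set S"
    proof -
      have "distinct pl" "distinct pu" using IH1 IH2 by auto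
      then show "distinct p" "set p = set S" unfolding p using mCL mCU CLU allset spl spu by auto
    qed
    have cost: "real d \<le> B N"
    proof -
      have d1: "d1 = s * (s - 1) div 2" using c1 by simp
      have "d = s * (s - 1) div 2 + (N - s) + d3 + d4" using dd1 dd2 dd3 dd4 d5 d1 c2 lR by simp
      then have "real d = real (s * (s - 1) div 2 + (N - s)) + real d3 + real d4" by simp
      also have "\<dots> \<le> real (s * (s - 1) div 2 + (N - s)) + B (length CL) + B (length CU)"
        using IH1 IH2 by simp
      also have "\<dots> \<le> B N" using cost_bound[OF N1 lsum] qCL qCU unfolding s_def q_def by simp
      finally show ?thesis .
    qed
    show ?thesis using dp sp sorted cost N_def by simp
  qed
qed


lemma powr_32: "real n powr (3/2) = real n * sqrt (real n)"
proof (cases "n = 0")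
  case True
  then show ?thesis by simp
next
  case False
  then have "real n > 0" by simp
  have "real n powr (1 + 1/2) = real n powr 1 * real n powr (1/2)" by (simp only: powr_add)
  also have "\<dots> = real n * sqrt (real n)" using \<open>real n > 0\<close> by (simp add: powr_half_sqrt)
  finally show ?thesis by simp
qed

theorem mainTheorem11:
  shows "\<exists>A :: nat \<Rightarrow> dtree. \<forall>n. queries_in n (A n) \<and>
     (\<forall>(x :: nat \<Rightarrow> real) d p. run x (A n) d p \<longrightarrow>
        real d \<le> 4 * real n powr (3/2) \<and> is_ordering n p \<and> k_sorted 2 x p)"
proof (rule exI[of _ "\<lambda>n. to_dtree (qs n [0..<n])"], intro allI conjI impI)
  fix n
  show "queries_in n (to_dtree (qs n [0..<n]))" by (rule qin_dtree[OF qs_qin]) auto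
  fix x d p
  assume r: "run x (to_dtree (qs n [0..<n])) d p"
  have e: "exec x (qs n [0..<n]) d p" by (rule run_exec[OF r]) simp
  have spec: "distinct p \<and> set p = set [0..<n] \<and> sorted_wrt (\<lambda>a b. x a - 2 \<le> x b) p \<and> real d \<le> B (length [0..<n])"
    by (rule qs_spec[OF e]) auto
  show "real d \<le> 4 * real n powr (3/2)" using spec unfolding B_def powr_32 by simp
  show "is_ordering n p" using spec unfolding is_ordering_def by auto
  show "k_sorted 2 x p"
    unfolding k_sorted_def
  proof (intro allI impI)
    fix i j assume ij: "i < length p" "j < i"
    have "sorted_wrt (\<lambda>a b. x a - 2 \<le> x b) p" using spec by simp
    then have "x (p ! j) - 2 \<le> x (p ! i)" unfolding sorted_wrt_iff_nth_less using ij by blast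
    then show "x (p ! i) \<ge> x (p ! j) - 2" by simp
  qed
qed

end
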